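(* Let $U:\mathbb{R}^d\times\mathcal{P}_2(\mathbb{R}^d)\to\mathbb{R}^d$ be continuous and $L^2$-monotone. Then for every $\mu\in\mathcal{P}_2(\mathbb{R}^d)$ the map $x\mapsto U(x,\mu)$ is monotone: $(U(x,\mu)-U(y,\mu))\cdot(x-y)\ge0$ for all $x,y\in\mathbb{R}^d$.
   Context: $(\Omega,\mathcal{A},\mathbb{P})$ is a standard (atomless) probability space and $L^2(\Omega,\mathbb{R}^d)$ the square integrable random vectors; $\mathcal{L}(X)$ is the law of $X$. $U$ is $L^2$-monotone if $\mathbb{E}[(U(X,\mathcal{L}(X))-U(Y,\mathcal{L}(Y)))\cdot(X-Y)]\ge0$ for all $X,Y\in L^2(\Omega,\mathbb{R}^d)$. $\mathcal{P}_2(\mathbb{R}^d)$ carries the 2-Wasserstein distance. *)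

theory Defs
  imports "HOL-Probability.Probability"
begin

definition atomless :: "'b measure \<Rightarrow> bool" where
  "atomless M \<longleftrightarrow> (\<forall>A\<in>sets M. measure M A > 0 \<longrightarrow>
      (\<exists>B\<in>sets M. B \<subseteq> A \<and> 0 < measure M B \<and> measure M B < measure M A))"

definition L2 :: "'b measure \<Rightarrow> ('b \<Rightarrow> 'a::euclidean_space) set" where
  "L2 M = {X. X \<in> borel_measurable M \<and> integrable M (\<lambda>\<omega>. (norm (X \<omega>))\<^sup>2)}"

definition law :: "'b measure \<Rightarrow> ('b \<Rightarrow> 'a::euclidean_space) \<Rightarrow> 'a measure" where
  "law M X = distr M borel X"

definition P2 :: "'a::euclidean_space measure set" where
  "P2 = {\<mu>. prob_space \<mu> \<and> sets \<mu> = sets (borel :: 'a measure) \<and>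
             integrable \<mu> (\<lambda>x. (norm x)\<^sup>2)}"

definition couplings :: "'a::euclidean_space measure \<Rightarrow> 'a measure \<Rightarrow> ('a \<times> 'a) measure set" where
  "couplings \<mu> \<nu> = {\<pi>. prob_space \<pi> \<and> sets \<pi> = sets (borel :: ('a \<times> 'a) measure) \<and>
                      distr \<pi> borel fst = \<mu> \<and> distr \<pi> borel snd = \<nu>}"

definition W2 :: "'a::euclidean_space measure \<Rightarrow> 'a measure \<Rightarrow> real" where
  "W2 \<mu> \<nu> = sqrt (enn2real (INF \<pi>\<in>couplings \<mu> \<nu>.
                 \<integral>\<^sup>+ p. ennreal ((norm (fst p - snd p))\<^sup>2) \<partial>\<pi>))"

definition continuous_P2 :: "('a::euclidean_space \<Rightarrow> 'a measure \<Rightarrow> 'a) \<Rightarrow> bool" where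
  "continuous_P2 U \<longleftrightarrow> (\<forall>x. \<forall>\<mu>\<in>P2. \<forall>e>0. \<exists>\<delta>>0. \<forall>y. \<forall>\<nu>\<in>P2.
      dist x y < \<delta> \<longrightarrow> W2 \<mu> \<nu> < \<delta> \<longrightarrow> dist (U x \<mu>) (U y \<nu>) < e)"

definition L2_monotone :: "'b measure \<Rightarrow> ('a::euclidean_space \<Rightarrow> 'a measure \<Rightarrow> 'a) \<Rightarrow> bool" where
  "L2_monotone M U \<longleftrightarrow> (\<forall>X\<in>L2 M. \<forall>Y\<in>L2 M.
      (\<integral>\<omega>. (U (X \<omega>) (law M X) - U (Y \<omega>) (law M Y)) \<bullet> (X \<omega> - Y \<omega>) \<partial>M) \<ge> 0)"

end

theory Submission
  imports Defs
begin

context prob_space begin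

lemma atomless_small:
  assumes al: "atomless M" and A: "A \<in> events" and pA: "prob A > 0" and eta: "\<eta> > 0"
  shows "\<exists>B\<in>events. B \<subseteq> A \<and> 0 < prob B \<and> prob B < \<eta>"
proof -
  have "\<exists>B\<in>events. B \<subseteq> A \<and> 0 < prob B \<and> prob B \<le> prob A / 2^n" for n
  proof (induction n)
    case 0 then show ?case using A pA by auto
  next
    case (Suc n)
    then obtain B where B: "B \<in> events" "B \<subseteq> A" "0 < prob B" "prob B \<le> prob A / 2^n" by blast
    then obtain C where C: "C \<in> events" "C \<subseteq> B" "0 < prob C" "prob C < prob B"
      using al unfolding atomless_def by blast
    have d: "prob (B - C) = prob B - prob C" using B C by (simp add: finite_measure_Diff)
    show ?case
    proof (cases "prob C \<le> prob B / 2")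
      case True then show ?thesis using B C by (intro bexI[of _ C]) auto
    next
      case False then show ?thesis using B C d by (intro bexI[of _ "B - C"]) auto
    qed
  qed
  moreover obtain n where "prob A / 2^n < \<eta>"
  proof -
    have "(\<lambda>n. prob A / 2^n) \<longlonglongrightarrow> 0"
      by (intro LIMSEQ_divide_realpow_zero) auto
    from order_tendstoD(2)[OF this eta] show ?thesis using that
      by (auto simp: eventually_sequentially)
  qed
  ultimately show ?thesis by (meson order_le_less_trans)
qed

lemma atomless_sierpinski:
  assumes al: "atomless M" and A: "A \<in> events" and t: "0 \<le> t" "t \<le> prob A"
  shows "\<exists>B\<in>events. B \<subseteq> A \<and> prob B = t"
proof -
  define good where "good B C \<longleftrightarrow> C \<in> events \<and> C \<subseteq> A - B \<and> prob B + prob C \<le> t" for B C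
  define s where "s B = Sup (prob ` {C. good B C})" for B
  define nx where "nx B = (SOME C. good B C \<and> s B \<le> 2 * prob C)" for B
  have bdd: "bdd_above (prob ` {C. good B C})" for B
    by (intro bdd_aboveI[of _ 1]) auto
  have ex: "\<exists>C. good B C \<and> s B \<le> 2 * prob C" if "prob B \<le> t" for B
  proof -
    have g0: "good B {}" using that by (simp add: good_def)
    then have ne: "prob ` {C. good B C} \<noteq> {}" by blast
    have s0: "0 \<le> s B" unfolding s_def using g0 bdd[of B]
      by (metis (mono_tags) cSup_upper image_eqI mem_Collect_eq measure_empty)
    show ?thesis
    proof (cases "s B = 0")
      case True then show ?thesis using g0 by auto
    next
      case False
      then have "s B / 2 < s B" using s0 by auto
      then obtain C where "good B C" "s B / 2 < prob C"
        unfolding s_def using less_cSup_iff[OF ne bdd[of B]] by auto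
      then show ?thesis by (intro exI[of _ C]) auto
    qed
  qed
  define Bs where "Bs n = ((\<lambda>B. B \<union> nx B) ^^ n) {}" for n
  have Bs_Suc: "Bs (Suc n) = Bs n \<union> nx (Bs n)" for n by (simp add: Bs_def)
  have inv: "Bs n \<in> events \<and> Bs n \<subseteq> A \<and> prob (Bs n) \<le> t
      \<and> good (Bs n) (nx (Bs n)) \<and> s (Bs n) \<le> 2 * prob (nx (Bs n))
      \<and> prob (Bs (Suc n)) = prob (Bs n) + prob (nx (Bs n))" for n
  proof (induction n)
    case 0
    have "prob (Bs 0) \<le> t" using t by (simp add: Bs_def)
    from someI_ex[OF ex[OF this]] have g: "good (Bs 0) (nx (Bs 0)) \<and> s (Bs 0) \<le> 2 * prob (nx (Bs 0))"
      by (simp add: nx_def)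
    then show ?case using A t unfolding Bs_Suc by (auto simp: Bs_def good_def)
  next
    case (Suc n)
    then have ev: "Bs (Suc n) \<in> events" "Bs (Suc n) \<subseteq> A" "prob (Bs (Suc n)) \<le> t"
      unfolding Bs_Suc good_def by auto
    from someI_ex[OF ex[OF ev(3)]] have g: "good (Bs (Suc n)) (nx (Bs (Suc n))) \<and> s (Bs (Suc n)) \<le> 2 * prob (nx (Bs (Suc n)))"
      by (simp add: nx_def)
    have "prob (Bs (Suc (Suc n))) = prob (Bs (Suc n)) + prob (nx (Bs (Suc n)))"
      unfolding Bs_Suc[of "Suc n"] using g ev by (intro finite_measure_Union) (auto simp: good_def)
    then show ?case using ev g by auto
  qed
  have psum: "prob (Bs n) = (\<Sum>k<n. prob (nx (Bs k)))" for n
    by (induction n) (use inv in \<open>auto simp: Bs_def\<close>)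
  have "summable (\<lambda>k. prob (nx (Bs k)))"
    by (rule summableI_nonneg_bounded[where x=t]) (use inv psum in auto)
  then have lim0: "(\<lambda>k. prob (nx (Bs k))) \<longlonglongrightarrow> 0" by (rule summable_LIMSEQ_zero)
  define Bi where "Bi = (\<Union>n. Bs n)"
  have inc: "incseq Bs" by (rule incseq_SucI) (simp add: Bs_Suc)
  have Bi: "Bi \<in> events" "Bi \<subseteq> A" using inv unfolding Bi_def by auto
  have "(\<lambda>n. prob (Bs n)) \<longlonglongrightarrow> prob Bi"
    unfolding Bi_def using inv inc by (intro Lim_measure_incseq) auto
  then have Bit: "prob Bi \<le> t" using inv by (intro LIMSEQ_le_const2) auto
  show ?thesis
  proof (cases "prob Bi = t")
    case True then show ?thesis using Bi by blast
  next
    case False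
    then have lt: "prob Bi < t" using Bit by auto
    have "prob (A - Bi) = prob A - prob Bi" using A Bi by (simp add: finite_measure_Diff)
    then have "prob (A - Bi) > 0" using lt t by auto
    then obtain D where D: "D \<in> events" "D \<subseteq> A - Bi" "0 < prob D" "prob D < t - prob Bi"
      using atomless_small[OF al _ _, of "A - Bi" "t - prob Bi"] A Bi lt by auto
    have "prob D \<le> 2 * prob (nx (Bs n))" for n
    proof -
      have "prob (Bs n) \<le> prob Bi" using inv Bi unfolding Bi_def by (intro finite_measure_mono) auto
      then have "good (Bs n) D" using D unfolding good_def Bi_def by auto
      then have "prob D \<le> s (Bs n)" unfolding s_def by (intro cSup_upper bdd) auto
      then show ?thesis using inv[of n] by auto
    qed
    moreover have "eventually (\<lambda>n. prob (nx (Bs n)) < prob D / 2) sequentially"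
      using order_tendstoD(2)[OF lim0, of "prob D / 2"] D(3) by simp
    then obtain n where "prob (nx (Bs n)) < prob D / 2" by (auto simp: eventually_sequentially)
    ultimately show ?thesis by (metis not_less mult.commute pos_less_divide_eq zero_less_numeral)
  qed
qed

lemma atomless_partition:
  assumes al: "atomless M" and R: "finite R" "R \<noteq> {}" and A: "A \<in> events"
    and sw: "(\<Sum>r\<in>R. w r) = prob A" and w: "\<And>r. r \<in> R \<Longrightarrow> 0 \<le> w r"
  shows "\<exists>F. (\<forall>r\<in>R. F r \<in> events \<and> F r \<subseteq> A \<and> prob (F r) = w r)
            \<and> disjoint_family_on F R \<and> (\<Union>r\<in>R. F r) = A"
  using R A sw w
proof (induction R arbitrary: A rule: finite_ne_induct)
  case (singleton r) then show ?case by (intro exI[of _ "\<lambda>_. A"]) (auto simp: disjoint_family_on_def)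
next
  case (insert r R)
  have s: "(\<Sum>r\<in>insert r R. w r) = w r + (\<Sum>r\<in>R. w r)" using insert by simp
  have "0 \<le> (\<Sum>r\<in>R. w r)" using insert by (intro sum_nonneg) auto
  then have wr: "w r \<le> prob A" using insert s by linarith
  obtain B where B: "B \<in> events" "B \<subseteq> A" "prob B = w r"
    using atomless_sierpinski[OF al insert.prems(1) _ wr] insert by auto
  have sAB: "(\<Sum>r\<in>R. w r) = prob (A - B)" using B insert s by (simp add: finite_measure_Diff)
  have "\<exists>F. (\<forall>r\<in>R. F r \<in> events \<and> F r \<subseteq> A - B \<and> prob (F r) = w r)
            \<and> disjoint_family_on F R \<and> (\<Union>r\<in>R. F r) = A - B"
  proof (rule insert.IH)
    show "A - B \<in> events" using B insert.prems by auto
    show "sum w R = prob (A - B)" by (fact sAB)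
    show "\<And>r. r \<in> R \<Longrightarrow> 0 \<le> w r" using insert.prems by auto
  qed
  then obtain F where F: "\<forall>r\<in>R. F r \<in> events \<and> F r \<subseteq> A - B \<and> prob (F r) = w r"
      "disjoint_family_on F R" "(\<Union>r\<in>R. F r) = A - B"
    by blast
  define G where "G = F(r := B)"
  have "\<forall>r'\<in>insert r R. G r' \<in> events \<and> G r' \<subseteq> A \<and> prob (G r') = w r'"
    using F B insert by (auto simp: G_def)
  moreover have "disjoint_family_on G (insert r R)"
  proof -
    have d: "disjoint_family_on G R" using F(2) insert(3) unfolding disjoint_family_on_def G_def
      by (metis fun_upd_other)
    have "(\<Union>i\<in>R. G i) = A - B" using F(3) insert(3) unfolding G_def by auto
    then show ?thesis using d insert(3) by (subst disjoint_family_on_insert) (auto simp: G_def)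
  qed
  moreover have "(\<Union>r'\<in>insert r R. G r') = A"
  proof -
    have "(\<Union>r'\<in>insert r R. G r') = B \<union> (\<Union>r'\<in>R. F r')"
      using insert(3) by (auto simp: G_def)
    then show ?thesis using F B by auto
  qed
  ultimately show ?case by blast
qed

end

lemma distr_finite_range_emeasure:
  fixes X :: "'b \<Rightarrow> 'c::euclidean_space"
  assumes X: "X \<in> borel_measurable N" and R: "finite R" "X ` space N \<subseteq> R" and S: "S \<in> sets borel"
  shows "emeasure (distr N borel X) S = (\<Sum>r\<in>S \<inter> R. emeasure (distr N borel X) {r})"
proof -
  have Rb: "R \<in> sets borel" using R by (intro borel_closed finite_imp_closed)
  have "emeasure (distr N borel X) S = emeasure N (X -` S \<inter> space N)" using X S by (rule emeasure_distr)
  also have "X -` S \<inter> space N = X -` (S \<inter> R) \<inter> space N" using R by auto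
  also have "emeasure N \<dots> = emeasure (distr N borel X) (S \<inter> R)" using X S Rb by (subst emeasure_distr) auto
  also have "\<dots> = (\<Sum>r\<in>S \<inter> R. emeasure (distr N borel X) {r})" using R by (intro emeasure_eq_sum_singleton) auto
  finally show ?thesis .
qed

lemma realize_finite:
  fixes Q :: "'c \<Rightarrow> 'd::euclidean_space"
  assumes M: "prob_space M" "atomless M" and N: "prob_space N" and Q: "Q \<in> borel_measurable N"
    and R: "finite R" "Q ` space N \<subseteq> R"
  shows "\<exists>W\<in>borel_measurable M. W ` space M \<subseteq> R \<and> distr M borel W = distr N borel Q"
proof -
  interpret M: prob_space M by fact
  interpret N: prob_space N by fact
  have Rne: "R \<noteq> {}" using R N.not_empty by auto
  have Rb: "R \<in> sets borel" using R by (intro borel_closed finite_imp_closed)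
  define w where "w r = measure N (Q -` {r} \<inter> space N)" for r
  have sw: "(\<Sum>r\<in>R. w r) = M.prob (space M)"
  proof -
    have "(\<Sum>r\<in>R. w r) = (\<Sum>r\<in>R. measure (distr N borel Q) {r})"
      unfolding w_def using Q by (intro sum.cong refl) (simp add: measure_distr)
    also have "\<dots> = measure (distr N borel Q) R"
      using R by (intro finite_measure.finite_measure_eq_sum_singleton[symmetric] N.finite_measure_distr Q) auto
    also have "\<dots> = measure N (Q -` R \<inter> space N)" using Q Rb by (simp add: measure_distr)
    also have "Q -` R \<inter> space N = space N" using R by auto
    finally show ?thesis using N.prob_space M.prob_space by simp
  qed
  have w0: "\<And>r. r \<in> R \<Longrightarrow> 0 \<le> w r" by (simp add: w_def)
  obtain F where F: "\<forall>r\<in>R. F r \<in> sets M \<and> F r \<subseteq> space M \<and> measure M (F r) = w r"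
      "disjoint_family_on F R" "(\<Union>r\<in>R. F r) = space M"
    using M.atomless_partition[OF M(2) R(1) Rne sets.top sw w0] by blast
  define W where "W \<omega> = (\<Sum>r\<in>R. indicator (F r) \<omega> *\<^sub>R r)" for \<omega>
  have Wr: "W \<omega> = r" if "r \<in> R" "\<omega> \<in> F r" for r \<omega>
  proof -
    have "W \<omega> = (\<Sum>r'\<in>R. if r' = r then r else 0)" unfolding W_def using F(2) that
      by (intro sum.cong refl) (auto simp: disjoint_family_on_def indicator_def)
    then show ?thesis using that R by simp
  qed
  have Wpre: "W -` {r} \<inter> space M = F r" if "r \<in> R" for r
  proof
    show "F r \<subseteq> W -` {r} \<inter> space M" using Wr that F by auto
    show "W -` {r} \<inter> space M \<subseteq> F r"
    proof
      fix \<omega> assume "\<omega> \<in> W -` {r} \<inter> space M"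
      then obtain r' where "r' \<in> R" "\<omega> \<in> F r'" "W \<omega> = r" using F(3) by auto
      then show "\<omega> \<in> F r" using Wr by auto
    qed
  qed
  have WR: "W ` space M \<subseteq> R"
  proof
    fix v assume "v \<in> W ` space M"
    then obtain \<omega> where "\<omega> \<in> space M" "v = W \<omega>" by auto
    then obtain r' where "r' \<in> R" "\<omega> \<in> F r'" using F(3) by auto
    then show "v \<in> R" using Wr \<open>v = W \<omega>\<close> by auto
  qed
  have Wm: "W \<in> borel_measurable M" unfolding W_def using F
    by (intro borel_measurable_sum borel_measurable_scaleR borel_measurable_indicator borel_measurable_const) auto
  have "distr M borel W = distr N borel Q"
  proof (rule measure_eqI)
    show "sets (distr M borel W) = sets (distr N borel Q)" by simp
    fix S assume "S \<in> sets (distr M borel W)"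
    then have S: "S \<in> sets borel" by simp
    have "emeasure (distr M borel W) S = (\<Sum>r\<in>S \<inter> R. emeasure (distr M borel W) {r})"
      by (rule distr_finite_range_emeasure[OF Wm R(1) WR S])
    also have "\<dots> = (\<Sum>r\<in>S \<inter> R. emeasure (distr N borel Q) {r})"
    proof (intro sum.cong refl)
      fix r assume r: "r \<in> S \<inter> R"
      have "emeasure (distr M borel W) {r} = emeasure M (F r)"
        using Wm Wpre r by (simp add: emeasure_distr)
      also have "\<dots> = ennreal (w r)" using F r by (simp add: M.emeasure_eq_measure)
      also have "\<dots> = emeasure (distr N borel Q) {r}"
        using Q by (simp add: emeasure_distr N.emeasure_eq_measure w_def)
      finally show "emeasure (distr M borel W) {r} = emeasure (distr N borel Q) {r}" .
    qed
    also have "\<dots> = emeasure (distr N borel Q) S"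
      by (rule distr_finite_range_emeasure[OF Q R S, symmetric])
    finally show "emeasure (distr M borel W) S = emeasure (distr N borel Q) S" .
  qed
  then show ?thesis using Wm WR by blast
qed


lemma borel_fst_snd:
  shows "fst \<in> borel_measurable (borel :: ('a::euclidean_space \<times> 'a) measure)"
    and "snd \<in> borel_measurable (borel :: ('a::euclidean_space \<times> 'a) measure)"
  by (simp_all add: borel_prod[symmetric])

lemma borel_pair_meas:
  fixes f g :: "'b \<Rightarrow> 'a::euclidean_space"
  assumes "f \<in> borel_measurable N" "g \<in> borel_measurable N"
  shows "(\<lambda>\<omega>. (f \<omega>, g \<omega>)) \<in> borel_measurable N"
  using assms by (simp add: borel_prod[symmetric])

lemma W2_le:
  fixes f g :: "'b \<Rightarrow> 'a::euclidean_space"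
  assumes N: "prob_space N" and f: "f \<in> borel_measurable N" and g: "g \<in> borel_measurable N"
    and c: "0 \<le> c" and I: "(\<integral>\<^sup>+\<omega>. ennreal ((norm (f \<omega> - g \<omega>))\<^sup>2) \<partial>N) \<le> ennreal c"
  shows "W2 (distr N borel f) (distr N borel g) \<le> sqrt c"
proof -
  define \<pi> where "\<pi> = distr N borel (\<lambda>\<omega>. (f \<omega>, g \<omega>))"
  have fg: "(\<lambda>\<omega>. (f \<omega>, g \<omega>)) \<in> borel_measurable N" using f g by (rule borel_pair_meas)
  have "\<pi> \<in> couplings (distr N borel f) (distr N borel g)"
    unfolding couplings_def \<pi>_def
  proof (intro CollectI conjI)
    show "prob_space (distr N borel (\<lambda>\<omega>. (f \<omega>, g \<omega>)))"
      using fg by (rule prob_space.prob_space_distr[OF N])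
    show "distr (distr N borel (\<lambda>\<omega>. (f \<omega>, g \<omega>))) borel fst = distr N borel f"
      using fg borel_fst_snd(1) by (subst distr_distr) (auto simp: comp_def)
    show "distr (distr N borel (\<lambda>\<omega>. (f \<omega>, g \<omega>))) borel snd = distr N borel g"
      using fg borel_fst_snd(2) by (subst distr_distr) (auto simp: comp_def)
  qed simp
  then have "(INF \<pi>\<in>couplings (distr N borel f) (distr N borel g).
                 \<integral>\<^sup>+ p. ennreal ((norm (fst p - snd p))\<^sup>2) \<partial>\<pi>)
      \<le> \<integral>\<^sup>+ p. ennreal ((norm (fst p - snd p))\<^sup>2) \<partial>\<pi>" by (rule INF_lower)
  also have "\<dots> = (\<integral>\<^sup>+\<omega>. ennreal ((norm (f \<omega> - g \<omega>))\<^sup>2) \<partial>N)"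
    unfolding \<pi>_def using fg
    by (subst nn_integral_distr) (auto intro!: measurable_compose[OF _ measurable_ennreal]
          borel_measurable_continuous_onI continuous_intros)
  also have "\<dots> \<le> ennreal c" by (fact I)
  finally have "enn2real (INF \<pi>\<in>couplings (distr N borel f) (distr N borel g).
                 \<integral>\<^sup>+ p. ennreal ((norm (fst p - snd p))\<^sup>2) \<partial>\<pi>) \<le> c"
    using c by (metis enn2real_ennreal enn2real_mono ennreal_less_top)
  then show ?thesis unfolding W2_def by simp
qed

lemma finite_range_L2_P2:
  fixes X :: "'b \<Rightarrow> 'a::euclidean_space"
  assumes M: "prob_space M" and X: "X \<in> borel_measurable M" and fin: "finite (X ` space M)"
  shows "X \<in> L2 M" and "law M X \<in> P2"
proof -
  interpret prob_space M by fact
  define B where "B = Max ((\<lambda>v. (norm v)\<^sup>2) ` X ` space M)"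
  have "(norm (X \<omega>))\<^sup>2 \<le> B" if "\<omega> \<in> space M" for \<omega>
    unfolding B_def using fin that by (intro Max_ge) auto
  then have int: "integrable M (\<lambda>\<omega>. (norm (X \<omega>))\<^sup>2)"
    using X by (intro integrable_const_bound[where B=B]) auto
  then show "X \<in> L2 M" using X by (simp add: L2_def)
  show "law M X \<in> P2" unfolding P2_def law_def
  proof (intro CollectI conjI)
    show "prob_space (distr M borel X)" using X by (rule prob_space_distr)
    show "integrable (distr M borel X) (\<lambda>x. (norm x)\<^sup>2)"
      using X int by (subst integrable_distr_eq) auto
  qed simp
qed


lemma quantize:
  fixes \<mu> :: "'a::euclidean_space measure"
  assumes mu: "\<mu> \<in> P2" and eta: "\<eta> > 0"
  shows "\<exists>T\<in>borel_measurable borel. finite (range T) \<and>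
           (\<integral>\<^sup>+ z. ennreal ((norm (z - T z))\<^sup>2) \<partial>\<mu>) \<le> ennreal \<eta>"
proof -
  from mu have pm: "prob_space \<mu>" and sm: "sets \<mu> = sets borel"
    and int2: "integrable \<mu> (\<lambda>x. (norm x)\<^sup>2)" by (auto simp: P2_def)
  interpret prob_space \<mu> by fact
  have meas: "\<And>f. f \<in> borel_measurable \<mu> \<longleftrightarrow> f \<in> borel_measurable borel"
    using measurable_cong_sets[OF sm refl] by blast
  define T where "T n z = (if norm z \<le> real (Suc n) then
      (\<Sum>b\<in>Basis. (of_int \<lfloor>real (Suc n) * (z \<bullet> b)\<rfloor> / real (Suc n)) *\<^sub>R b) else 0)"
    for n :: nat and z :: 'a
  have Tm: "T n \<in> borel_measurable borel" for n
    unfolding T_def by measurable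
  have Tfin: "finite (range (T n))" for n
  proof -
    define m where "m = real (Suc n)"
    define K where "K = \<lceil>m * m\<rceil> + 1"
    have m1: "m \<ge> 1" by (simp add: m_def)
    have sub: "range (T n) \<subseteq> insert 0 ((\<lambda>k. \<Sum>b\<in>Basis. (of_int (k b) / m) *\<^sub>R b) ` (Basis \<rightarrow>\<^sub>E {-K..K}))"
    proof
      fix v assume "v \<in> range (T n)"
      then obtain z where v: "v = T n z" by auto
      show "v \<in> insert 0 ((\<lambda>k. \<Sum>b\<in>Basis. (of_int (k b) / m) *\<^sub>R b) ` (Basis \<rightarrow>\<^sub>E {-K..K}))"
      proof (cases "norm z \<le> m")
        case False then show ?thesis using v by (simp add: T_def m_def)
      next
        case True
        define k where "k = restrict (\<lambda>b. \<lfloor>m * (z \<bullet> b)\<rfloor>) Basis"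
        have "k \<in> Basis \<rightarrow>\<^sub>E {-K..K}"
        proof -
          have "\<lfloor>m * (z \<bullet> b)\<rfloor> \<in> {-K..K}" if b: "b \<in> Basis" for b
          proof -
            have "\<bar>z \<bullet> b\<bar> \<le> m" using Basis_le_norm[OF b, of z] True by linarith
            then have "\<bar>m * (z \<bullet> b)\<bar> \<le> m * m" using m1 by (simp add: abs_mult mult_left_mono)
            moreover have "m * m \<le> real_of_int \<lceil>m * m\<rceil>" by linarith
            ultimately show ?thesis unfolding K_def by (simp; linarith)
          qed
          then show ?thesis unfolding k_def by auto
        qed
        moreover have "v = (\<Sum>b\<in>Basis. (of_int (k b) / m) *\<^sub>R b)"
          using v True unfolding T_def k_def m_def by (auto intro!: sum.cong)
        ultimately show ?thesis by blast
      qed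
    qed
    have fin: "finite (Basis \<rightarrow>\<^sub>E {-K..K})" by (intro finite_PiE) auto
    show ?thesis by (rule finite_subset[OF sub finite.insertI[OF finite_imageI[OF fin]]])
  qed
  have err: "norm (z - T n z) \<le> real DIM('a) / real (Suc n)" if "norm z \<le> real (Suc n)" for n z
  proof -
    define m where "m = real (Suc n)"
    have m0: "m > 0" by (simp add: m_def)
    have "z - T n z = (\<Sum>b\<in>Basis. (z \<bullet> b - of_int \<lfloor>m * (z \<bullet> b)\<rfloor> / m) *\<^sub>R b)"
      using that unfolding T_def m_def[symmetric]
      by (simp add: scaleR_diff_left sum_subtractf euclidean_representation)
    also have "norm \<dots> \<le> (\<Sum>b\<in>Basis. norm ((z \<bullet> b - of_int \<lfloor>m * (z \<bullet> b)\<rfloor> / m) *\<^sub>R b))"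
      by (rule norm_sum)
    also have "\<dots> \<le> (\<Sum>b\<in>(Basis::'a set). 1 / m)"
    proof (intro sum_mono)
      fix b :: 'a assume b: "b \<in> Basis"
      define x where "x = z \<bullet> b"
      have "0 \<le> m * x - of_int \<lfloor>m * x\<rfloor>" "m * x - of_int \<lfloor>m * x\<rfloor> < 1" by linarith+
      moreover have e: "x - of_int \<lfloor>m * x\<rfloor> / m = (m * x - of_int \<lfloor>m * x\<rfloor>) / m"
        using m0 by (simp add: field_simps)
      ultimately have "\<bar>x - of_int \<lfloor>m * x\<rfloor> / m\<bar> \<le> 1 / m" using m0
        by (simp add: divide_right_mono)
      then show "norm ((z \<bullet> b - of_int \<lfloor>m * (z \<bullet> b)\<rfloor> / m) *\<^sub>R b) \<le> 1 / m"
        using b by (simp add: x_def)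
    qed
    also have "\<dots> = real DIM('a) / real (Suc n)" by (simp add: m_def)
    finally show ?thesis .
  qed
  define g where "g n z = (norm (z - T n z))\<^sup>2" for n z
  define w where "w z = (real DIM('a))\<^sup>2 + (norm z)\<^sup>2" for z :: 'a
  have bound: "g n z \<le> w z" for n z
  proof (cases "norm z \<le> real (Suc n)")
    case True
    have "real DIM('a) / real (Suc n) \<le> real DIM('a)" by (simp add: divide_le_eq)
    then have "norm (z - T n z) \<le> real DIM('a)" using err[OF True] by linarith
    then have "g n z \<le> (real DIM('a))\<^sup>2" unfolding g_def by (intro power_mono) auto
    then show ?thesis unfolding w_def by (smt (verit) zero_le_power2)
  next
    case False then show ?thesis by (simp add: g_def w_def T_def)
  qed
  have lim: "(\<lambda>n. g n z) \<longlonglongrightarrow> 0" for z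
  proof (rule tendsto_sandwich[where f="\<lambda>n. 0" and h="\<lambda>n. (real DIM('a) / real (Suc n))\<^sup>2"])
    show "\<forall>\<^sub>F n in sequentially. 0 \<le> g n z" by (simp add: g_def)
    have "\<forall>\<^sub>F n in sequentially. norm z \<le> real (Suc n)"
      unfolding eventually_sequentially
    proof (intro exI[of _ "nat \<lceil>norm z\<rceil>"] allI impI)
      fix n assume "nat \<lceil>norm z\<rceil> \<le> n"
      then have "real (nat \<lceil>norm z\<rceil>) \<le> real (Suc n)" by (metis le_SucI of_nat_le_iff)
      then show "norm z \<le> real (Suc n)" using real_nat_ceiling_ge[of "norm z"] by linarith
    qed
    then show "\<forall>\<^sub>F n in sequentially. g n z \<le> (real DIM('a) / real (Suc n))\<^sup>2"
      by eventually_elim (unfold g_def, intro power_mono err, auto)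
    show "(\<lambda>n. 0) \<longlonglongrightarrow> (0::real)" by simp
    have "(\<lambda>n. real DIM('a) / real (Suc n)) \<longlonglongrightarrow> 0"
      using LIMSEQ_Suc[OF lim_const_over_n[of "real DIM('a)"]] by simp
    from tendsto_power[OF this, of 2] show "(\<lambda>n. (real DIM('a) / real (Suc n))\<^sup>2) \<longlonglongrightarrow> 0" by simp
  qed
  have gm: "g n \<in> borel_measurable \<mu>" for n
    unfolding meas g_def using Tm[of n] by measurable
  have wi: "integrable \<mu> w" unfolding w_def using int2 by auto
  have gnn: "0 \<le> g n z" for n z by (simp add: g_def)
  have bnd: "AE x in \<mu>. norm (g n x) \<le> w x" for n using bound gnn by simp
  have zm: "(\<lambda>z. 0::real) \<in> borel_measurable \<mu>" by simp
  have AEl: "AE x in \<mu>. (\<lambda>n. g n x) \<longlonglongrightarrow> 0" using lim by simp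
  have conv: "(\<lambda>n. integral\<^sup>L \<mu> (g n)) \<longlonglongrightarrow> integral\<^sup>L \<mu> (\<lambda>z. 0)"
    by (rule integral_dominated_convergence[where w=w, OF zm gm wi AEl bnd])
  have gi: "\<And>n. integrable \<mu> (g n)"
    by (rule integrable_dominated_convergence2[where w=w, OF zm gm wi AEl bnd])
  from order_tendstoD(2)[OF conv, of \<eta>] eta obtain n where n: "integral\<^sup>L \<mu> (g n) < \<eta>"
    by (auto simp: eventually_sequentially)
  have "(\<integral>\<^sup>+ z. ennreal ((norm (z - T n z))\<^sup>2) \<partial>\<mu>) = (\<integral>\<^sup>+ z. ennreal (g n z) \<partial>\<mu>)"
    by (simp add: g_def)
  also have "\<dots> = ennreal (integral\<^sup>L \<mu> (g n))"
    using gi gnn by (intro nn_integral_eq_integral) auto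
  also have "\<dots> \<le> ennreal \<eta>" using n by (intro ennreal_leI) auto
  finally show ?thesis using Tm Tfin by blast
qed


lemma sq_norm_diff_le: "(norm (z - a))\<^sup>2 \<le> 2 * (norm z)\<^sup>2 + 2 * (norm (a::'a::real_normed_vector))\<^sup>2"
proof -
  have "norm (z - a) \<le> norm z + norm a" by (rule norm_triangle_ineq4)
  then have "(norm (z - a))\<^sup>2 \<le> (norm z + norm a)\<^sup>2" by (intro power_mono) auto
  moreover have "0 \<le> (norm z - norm a)\<^sup>2" by simp
  ultimately show ?thesis by (simp add: power2_sum power2_diff)
qed

lemma key_approx:
  fixes M :: "'b measure" and U :: "'a::euclidean_space \<Rightarrow> 'a measure \<Rightarrow> 'a"
  assumes M: "prob_space M" "atomless M" and mono: "L2_monotone M U"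
    and mu: "\<mu> \<in> P2" and xy: "x \<noteq> y" and d: "\<delta> > 0"
  shows "\<exists>\<nu>1\<in>P2. \<exists>\<nu>2\<in>P2. W2 \<mu> \<nu>1 < \<delta> \<and> W2 \<mu> \<nu>2 < \<delta> \<and> 0 \<le> (U x \<nu>1 - U y \<nu>2) \<bullet> (x - y)"
proof -
  interpret Mp: prob_space M by fact
  from mu have pm: "prob_space \<mu>" and sm: "sets \<mu> = sets borel"
    and int2: "integrable \<mu> (\<lambda>x. (norm x)\<^sup>2)" by (auto simp: P2_def)
  interpret mu: prob_space \<mu> by fact
  have meas: "\<And>f. f \<in> borel_measurable \<mu> \<longleftrightarrow> f \<in> borel_measurable borel"
    using measurable_cong_sets[OF sm refl] by blast
  have d2: "\<delta>\<^sup>2 / 4 > 0" using d by simp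
  obtain T where Tm: "T \<in> borel_measurable borel" and Tf: "finite (range T)"
    and TI: "(\<integral>\<^sup>+ z. ennreal ((norm (z - T z))\<^sup>2) \<partial>\<mu>) \<le> ennreal (\<delta>\<^sup>2 / 4)"
    using quantize[OF mu d2] by blast
  have Tmu[measurable]: "T \<in> borel_measurable \<mu>" using meas[THEN iffD2, OF Tm] .
  have ia: "integrable \<mu> (\<lambda>z. (norm (z - a))\<^sup>2)" for a
  proof -
    have i1: "integrable \<mu> (\<lambda>z. 2 * (norm z)\<^sup>2 + 2 * (norm a)\<^sup>2)" using int2 by auto
    have m1: "(\<lambda>z. (norm (z - a))\<^sup>2) \<in> borel_measurable \<mu>" unfolding meas by measurable
    have ae: "AE z in \<mu>. norm ((norm (z - a))\<^sup>2) \<le> norm (2 * (norm z)\<^sup>2 + 2 * (norm a)\<^sup>2)"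
      by (intro AE_I2) (simp add: sq_norm_diff_le)
    show ?thesis by (rule Bochner_Integration.integrable_bound[OF i1 m1 ae])
  qed
  define Ia where "Ia a = (\<integral>z. (norm (z - a))\<^sup>2 \<partial>\<mu>)" for a
  have Ia0: "0 \<le> Ia a" for a unfolding Ia_def by (intro integral_nonneg_AE) auto
  have Ia_nn: "(\<integral>\<^sup>+ z. ennreal ((norm (z - a))\<^sup>2) \<partial>\<mu>) = ennreal (Ia a)" for a
    unfolding Ia_def using ia by (intro nn_integral_eq_integral) auto
  define \<epsilon> where "\<epsilon> = min (1/2) (\<delta>\<^sup>2 / (4 * (Ia x + Ia y + 1)))"
  have e0: "0 < \<epsilon>" using d Ia0[of x] Ia0[of y] by (auto simp: \<epsilon>_def)
  have e1: "\<epsilon> \<le> 1/2" unfolding \<epsilon>_def by (rule min.cobounded1)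
  have eI: "\<epsilon> * Ia a \<le> \<delta>\<^sup>2 / 4" if "a = x \<or> a = y" for a
  proof -
    have "\<epsilon> * Ia a \<le> (\<delta>\<^sup>2 / (4 * (Ia x + Ia y + 1))) * (Ia x + Ia y + 1)"
      using that Ia0[of x] Ia0[of y] e0 by (intro mult_mono) (auto simp: \<epsilon>_def)
    also have "\<dots> = \<delta>\<^sup>2 / 4" using Ia0[of x] Ia0[of y] by (simp add: field_simps)
    finally show ?thesis .
  qed
  define B where "B = measure_pmf (bernoulli_pmf \<epsilon>)"
  interpret B: prob_space B unfolding B_def by (rule prob_space_measure_pmf)
  define N where "N = \<mu> \<Otimes>\<^sub>M B"
  have pN: "prob_space N" unfolding N_def using pm B.prob_space_axioms by (rule prob_space_pair)
  have spN: "space N = UNIV" unfolding N_def B_def using sm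
    by (simp add: space_pair_measure sets_eq_imp_space_eq)
  define X1 where "X1 p = (if snd p then x else T (fst p))" for p
  define Y1 where "Y1 p = (if snd p then y else T (fst p))" for p
  define Q where "Q p = (X1 p, Y1 p)" for p
  have X1m: "X1 \<in> borel_measurable N" and Y1m: "Y1 \<in> borel_measurable N"
    unfolding X1_def Y1_def N_def B_def by measurable
  have Qm: "Q \<in> borel_measurable N" unfolding Q_def using X1m Y1m by (rule borel_pair_meas)
  define R where "R = (\<lambda>v. (v, v)) ` range T \<union> {(x, y)}"
  have Rf: "finite R" using Tf by (simp add: R_def)
  have QR: "Q ` space N \<subseteq> R" unfolding R_def Q_def X1_def Y1_def by auto
  obtain W where Wm: "W \<in> borel_measurable M" and WR: "W ` space M \<subseteq> R"
    and WQ: "distr M borel W = distr N borel Q"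
    using realize_finite[OF M pN Qm Rf QR] by blast
  define Xm where "Xm \<omega> = fst (W \<omega>)" for \<omega>
  define Ym where "Ym \<omega> = snd (W \<omega>)" for \<omega>
  have Xmm: "Xm \<in> borel_measurable M" unfolding Xm_def
    using measurable_compose[OF Wm borel_fst_snd(1)] by (simp add: comp_def)
  have Ymm: "Ym \<in> borel_measurable M" unfolding Ym_def
    using measurable_compose[OF Wm borel_fst_snd(2)] by (simp add: comp_def)
  have lawX: "law M Xm = distr N borel X1"
  proof -
    have "law M Xm = distr (distr M borel W) borel fst"
      unfolding law_def Xm_def using Wm borel_fst_snd(1) by (subst distr_distr) (auto simp: comp_def)
    also have "\<dots> = distr N borel X1"
      unfolding WQ using Qm borel_fst_snd(1) by (subst distr_distr) (auto simp: comp_def Q_def)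
    finally show ?thesis .
  qed
  have lawY: "law M Ym = distr N borel Y1"
  proof -
    have "law M Ym = distr (distr M borel W) borel snd"
      unfolding law_def Ym_def using Wm borel_fst_snd(2) by (subst distr_distr) (auto simp: comp_def)
    also have "\<dots> = distr N borel Y1"
      unfolding WQ using Qm borel_fst_snd(2) by (subst distr_distr) (auto simp: comp_def Q_def)
    finally show ?thesis .
  qed
  have finX: "finite (Xm ` space M)"
  proof -
    have "Xm ` space M \<subseteq> fst ` R" using WR unfolding Xm_def by auto
    then show ?thesis using Rf by (meson finite_imageI finite_subset)
  qed
  have finY: "finite (Ym ` space M)"
  proof -
    have "Ym ` space M \<subseteq> snd ` R" using WR unfolding Ym_def by auto
    then show ?thesis using Rf by (meson finite_imageI finite_subset)
  qed
  note XP = finite_range_L2_P2[OF M(1) Xmm finX]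
  note YP = finite_range_L2_P2[OF M(1) Ymm finY]
  define \<nu>1 where "\<nu>1 = law M Xm"
  define \<nu>2 where "\<nu>2 = law M Ym"
  have mu_eq: "\<mu> = distr N borel fst"
  proof -
    have "distr N borel fst = distr N \<mu> fst"
      using sm by (intro distr_cong) auto
    also have "\<dots> = \<mu>" unfolding N_def by (rule B.distr_pair_fst)
    finally show ?thesis by simp
  qed
  have spmu: "space \<mu> = UNIV" using sets_eq_imp_space_eq[OF sm] by simp
  have fstm: "fst \<in> borel_measurable N"
    using measurable_fst[of \<mu> B] unfolding N_def by (simp add: measurable_cong_sets[OF refl sm])
  have eB: "emeasure B {True} = ennreal \<epsilon>"
    unfolding B_def using e0 e1 by (simp add: emeasure_pmf_single)
  have W2gen: "W2 \<mu> (distr N borel (\<lambda>p. if snd p then a else T (fst p))) < \<delta>" if a: "a = x \<or> a = y" for a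
  proof -
    define G where "G p = (if snd p then a else T (fst p))" for p
    have Gm: "G \<in> borel_measurable N" unfolding G_def N_def B_def by measurable
    define h where "h p = ennreal ((norm (fst p - T (fst p)))\<^sup>2) + ennreal ((norm (fst p - a))\<^sup>2) * indicator {True} (snd p)" for p
    have f1[measurable]: "(\<lambda>z. ennreal ((norm (z - T z))\<^sup>2)) \<in> borel_measurable \<mu>" unfolding meas using Tm by measurable
    have f2[measurable]: "(\<lambda>z. ennreal ((norm (z - a))\<^sup>2)) \<in> borel_measurable \<mu>" unfolding meas by measurable
    have f1'[measurable]: "(\<lambda>p. ennreal ((norm (fst p - T (fst p)))\<^sup>2)) \<in> borel_measurable (\<mu> \<Otimes>\<^sub>M B)"
      using measurable_compose[OF measurable_fst f1] by (simp add: comp_def)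
    have f2'[measurable]: "(\<lambda>p. ennreal ((norm (fst p - a))\<^sup>2)) \<in> borel_measurable (\<mu> \<Otimes>\<^sub>M B)"
      using measurable_compose[OF measurable_fst f2] by (simp add: comp_def)
    have f3[measurable]: "(\<lambda>p. indicator {True} (snd p) :: ennreal) \<in> borel_measurable (\<mu> \<Otimes>\<^sub>M B)"
      by (rule measurable_compose[OF measurable_snd]) (simp add: B_def)
    have hm: "h \<in> borel_measurable (\<mu> \<Otimes>\<^sub>M B)" unfolding h_def by measurable
    have pw: "ennreal ((norm (fst p - G p))\<^sup>2) \<le> h p" for p
    proof (cases "snd p")
      case True
      have "ennreal ((norm (fst p - a))\<^sup>2) \<le> ennreal ((norm (fst p - T (fst p)))\<^sup>2) + ennreal ((norm (fst p - a))\<^sup>2)"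
        by (rule add_increasing) auto
      then show ?thesis using True by (simp add: G_def h_def)
    next
      case False then show ?thesis by (simp add: G_def h_def)
    qed
    have "(\<integral>\<^sup>+ p. ennreal ((norm (fst p - G p))\<^sup>2) \<partial>N) \<le> (\<integral>\<^sup>+ p. h p \<partial>N)"
      by (intro nn_integral_mono pw)
    also have "\<dots> = (\<integral>\<^sup>+ z. \<integral>\<^sup>+ b. h (z, b) \<partial>B \<partial>\<mu>)"
      unfolding N_def by (rule B.nn_integral_fst[OF hm, symmetric])
    also have "\<dots> = (\<integral>\<^sup>+ z. ennreal ((norm (z - T z))\<^sup>2) + ennreal ((norm (z - a))\<^sup>2) * ennreal \<epsilon> \<partial>\<mu>)"
    proof (intro nn_integral_cong)
      fix z
      have "(\<integral>\<^sup>+ b. h (z, b) \<partial>B) = (\<integral>\<^sup>+ b. ennreal ((norm (z - T z))\<^sup>2) \<partial>B)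
          + (\<integral>\<^sup>+ b. ennreal ((norm (z - a))\<^sup>2) * indicator {True} b \<partial>B)"
        unfolding h_def fst_conv snd_conv by (rule nn_integral_add) (auto simp: B_def)
      also have "\<dots> = ennreal ((norm (z - T z))\<^sup>2) + ennreal ((norm (z - a))\<^sup>2) * ennreal \<epsilon>"
        by (subst nn_integral_cmult_indicator) (auto simp: B_def eB[unfolded B_def] B.emeasure_space_1[unfolded B_def])
      finally show "(\<integral>\<^sup>+ b. h (z, b) \<partial>B) = ennreal ((norm (z - T z))\<^sup>2) + ennreal ((norm (z - a))\<^sup>2) * ennreal \<epsilon>" .
    qed
    also have "\<dots> = (\<integral>\<^sup>+ z. ennreal ((norm (z - T z))\<^sup>2) \<partial>\<mu>) + (\<integral>\<^sup>+ z. ennreal ((norm (z - a))\<^sup>2) \<partial>\<mu>) * ennreal \<epsilon>"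
      by (subst nn_integral_add) (measurable, simp add: nn_integral_multc[OF f2])
    also have "\<dots> \<le> ennreal (\<delta>\<^sup>2 / 4) + ennreal (Ia a) * ennreal \<epsilon>"
      unfolding Ia_nn by (intro add_mono TI order_refl)
    also have "\<dots> = ennreal (\<delta>\<^sup>2 / 4 + \<epsilon> * Ia a)"
    proof -
      have "ennreal (Ia a) * ennreal \<epsilon> = ennreal (\<epsilon> * Ia a)"
        using ennreal_mult[OF Ia0[of a], of \<epsilon>] e0 by (simp add: mult.commute)
      moreover have "ennreal (\<delta>\<^sup>2 / 4 + \<epsilon> * Ia a) = ennreal (\<delta>\<^sup>2 / 4) + ennreal (\<epsilon> * Ia a)"
        using Ia0[of a] e0 by (intro ennreal_plus) auto
      ultimately show ?thesis by simp
    qed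
    also have "\<dots> \<le> ennreal (\<delta>\<^sup>2 / 2)" using eI[OF a] by (intro ennreal_leI) simp
    finally have I: "(\<integral>\<^sup>+ p. ennreal ((norm (fst p - G p))\<^sup>2) \<partial>N) \<le> ennreal (\<delta>\<^sup>2 / 2)" .
    have "W2 (distr N borel fst) (distr N borel G) \<le> sqrt (\<delta>\<^sup>2 / 2)"
      by (rule W2_le[OF pN fstm Gm _ I]) simp
    also have "sqrt (\<delta>\<^sup>2 / 2) < sqrt (\<delta>\<^sup>2)" using d by (intro real_sqrt_less_mono) simp
    also have "sqrt (\<delta>\<^sup>2) = \<delta>" using d by simp
    finally show ?thesis unfolding G_def mu_eq[symmetric] .
  qed
  have W1: "W2 \<mu> \<nu>1 < \<delta>" unfolding \<nu>1_def lawX X1_def using W2gen by blast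
  have W2': "W2 \<mu> \<nu>2 < \<delta>" unfolding \<nu>2_def lawY Y1_def using W2gen by blast
  define c where "c = (U x \<nu>1 - U y \<nu>2) \<bullet> (x - y)"
  define E where "E = W -` {(x, y)} \<inter> space M"
  have Es: "E \<in> sets M" unfolding E_def using Wm by (intro measurable_sets[OF Wm]) auto
  have pw: "(U (Xm \<omega>) \<nu>1 - U (Ym \<omega>) \<nu>2) \<bullet> (Xm \<omega> - Ym \<omega>) = c * indicator E \<omega>"
    if \<omega>: "\<omega> \<in> space M" for \<omega>
  proof -
    have "W \<omega> \<in> R" using WR \<omega> by auto
    then consider v where "W \<omega> = (v, v)" | "W \<omega> = (x, y)" unfolding R_def by auto
    then show ?thesis
    proof cases
      case (1 v)
      then have "Xm \<omega> = v" "Ym \<omega> = v" by (auto simp: Xm_def Ym_def)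
      moreover have "\<omega> \<notin> E" using 1 xy by (simp add: E_def)
      ultimately show ?thesis by simp
    next
      case 2
      then have "Xm \<omega> = x" "Ym \<omega> = y" by (auto simp: Xm_def Ym_def)
      moreover have "\<omega> \<in> E" using 2 \<omega> by (simp add: E_def)
      ultimately show ?thesis by (simp add: c_def)
    qed
  qed
  have "0 \<le> (\<integral>\<omega>. (U (Xm \<omega>) (law M Xm) - U (Ym \<omega>) (law M Ym)) \<bullet> (Xm \<omega> - Ym \<omega>) \<partial>M)"
    using mono XP(1) YP(1) unfolding L2_monotone_def by blast
  also have "\<dots> = (\<integral>\<omega>. c * indicator E \<omega> \<partial>M)"
    unfolding \<nu>1_def[symmetric] \<nu>2_def[symmetric] using pw by (intro Bochner_Integration.integral_cong) auto
  also have "\<dots> = c * measure M E" using Es by (simp add: sets.Int_space_eq2)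
  finally have cE: "0 \<le> c * measure M E" .
  have "measure M E = measure (distr M borel W) {(x, y)}"
    unfolding E_def using Wm by (subst measure_distr) auto
  also have "\<dots> = measure N (Q -` {(x, y)} \<inter> space N)"
    unfolding WQ using Qm by (subst measure_distr) auto
  also have "Q -` {(x, y)} \<inter> space N = UNIV \<times> {True}"
    using xy unfolding spN Q_def X1_def Y1_def by (auto split: if_splits)
  also have "measure N (UNIV \<times> {True}) = \<epsilon>"
  proof -
    have "emeasure N (UNIV \<times> {True}) = emeasure \<mu> UNIV * emeasure B {True}"
      unfolding N_def using sm spmu by (intro B.emeasure_pair_measure_Times) (auto simp: B_def)
    also have "\<dots> = ennreal \<epsilon>" using mu.emeasure_space_1 spmu eB by simp
    finally show ?thesis using e0 by (simp add: measure_def)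
  qed
  finally have "measure M E = \<epsilon>" .
  then have "0 \<le> c" using cE e0 by (simp add: zero_le_mult_iff)
  then show ?thesis using XP(2) YP(2) W1 W2' unfolding c_def \<nu>1_def \<nu>2_def by blast
qed


theorem lemma2p8:
  fixes M :: "'b measure" and U :: "'a::euclidean_space \<Rightarrow> 'a measure \<Rightarrow> 'a"
  assumes "prob_space M" and "atomless M"
    and "continuous_P2 U" and "L2_monotone M U"
  shows "\<forall>\<mu>\<in>P2. \<forall>x y. (U x \<mu> - U y \<mu>) \<bullet> (x - y) \<ge> 0"
proof (intro ballI allI)
  fix \<mu> :: "'a measure" and x y :: 'a assume mu: "\<mu> \<in> P2"
  define c0 where "c0 = (U x \<mu> - U y \<mu>) \<bullet> (x - y)"
  show "0 \<le> (U x \<mu> - U y \<mu>) \<bullet> (x - y)"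
  proof (rule ccontr)
    assume "\<not> 0 \<le> (U x \<mu> - U y \<mu>) \<bullet> (x - y)"
    then have c0: "c0 < 0" by (simp add: c0_def)
    then have xy: "x \<noteq> y" by (auto simp: c0_def)
    define L where "L = norm (x - y)"
    have L0: "0 \<le> L" by (simp add: L_def)
    define e where "e = - c0 / (2 * L + 1)"
    have e0: "e > 0" using c0 L0 unfolding e_def by (intro divide_pos_pos) auto
    obtain \<delta>1 where d1: "\<delta>1 > 0" and D1: "\<And>\<nu>. \<nu> \<in> P2 \<Longrightarrow> W2 \<mu> \<nu> < \<delta>1 \<Longrightarrow> dist (U x \<mu>) (U x \<nu>) < e"
      using assms(3) mu e0 unfolding continuous_P2_def by (metis dist_self)
    obtain \<delta>2 where d2: "\<delta>2 > 0" and D2: "\<And>\<nu>. \<nu> \<in> P2 \<Longrightarrow> W2 \<mu> \<nu> < \<delta>2 \<Longrightarrow> dist (U y \<mu>) (U y \<nu>) < e"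
      using assms(3) mu e0 unfolding continuous_P2_def by (metis dist_self)
    have d: "min \<delta>1 \<delta>2 > 0" using d1 d2 by simp
    obtain \<nu>1 \<nu>2 where n: "\<nu>1 \<in> P2" "\<nu>2 \<in> P2" "W2 \<mu> \<nu>1 < min \<delta>1 \<delta>2" "W2 \<mu> \<nu>2 < min \<delta>1 \<delta>2"
      and pos: "0 \<le> (U x \<nu>1 - U y \<nu>2) \<bullet> (x - y)"
      using key_approx[OF assms(1,2,4) mu xy d] by blast
    have a1: "norm (U x \<nu>1 - U x \<mu>) < e" using D1[OF n(1)] n(3) by (simp add: dist_norm norm_minus_commute)
    have a2: "norm (U y \<nu>2 - U y \<mu>) < e" using D2[OF n(2)] n(4) by (simp add: dist_norm norm_minus_commute)
    define dd where "dd = (U x \<nu>1 - U x \<mu>) - (U y \<nu>2 - U y \<mu>)"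
    have eq: "(U x \<nu>1 - U y \<nu>2) \<bullet> (x - y) = c0 + dd \<bullet> (x - y)"
      unfolding c0_def dd_def by (simp add: inner_diff_left)
    have cs: "dd \<bullet> (x - y) \<le> norm dd * L" unfolding L_def by (rule norm_cauchy_schwarz)
    have "norm dd \<le> 2 * e"
    proof -
      have "norm dd \<le> norm (U x \<nu>1 - U x \<mu>) + norm (U y \<nu>2 - U y \<mu>)"
        unfolding dd_def by (rule norm_triangle_ineq4)
      then show ?thesis using a1 a2 by linarith
    qed
    then have m: "norm dd * L \<le> 2 * e * L" using L0 by (intro mult_right_mono)
    have "2 * e * L < - c0"
    proof -
      have "2 * e * L = - c0 * (2 * L / (2 * L + 1))" unfolding e_def using L0 by (simp add: field_simps)
      also have "\<dots> < - c0 * 1" using c0 L0 by (intro mult_strict_left_mono) auto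
      finally show ?thesis by simp
    qed
    then show False using pos eq cs m by linarith
  qed
qed

end
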